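(* Let $t=(t_{j,a},\bar t_{j,b})$, $j\ge1$, $a=1,\dots,p_1$, $b=1,\dots,p_2$, be real parameters and define $g(t)=W_0(t)\,g\,\bar W_0(t)^{-1}$. Then $g(t)$ is the moment matrix (for the same $\mu$ and compositions) associated with the deformed weights $$w_{1,a}(x,t)=\mathcal E_a(x,t)w_{1,a}(x),\quad \mathcal E_a=\exp\Big(\sum_{j\ge1}t_{j,a}x^j\Big),\qquad w_{2,b}(x,t)=\bar{\mathcal E}_b(x,t)^{-1}w_{2,b}(x),\quad\bar{\mathcal E}_b=\exp\Big(\sum_{j\ge1}\bar t_{j,b}x^j\Big),$$ i.e. $g(t)_{i,j}=\int x^{k_1(i)+k_2(j)}w_{1,a_1(i)}(x,t)w_{2,a_2(j)}(x,t)d\mu(x)$.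
   Context: $\mu$ finite Borel measure on an interval; weights $w_{1,a}$ ($a\le p_1$), $w_{2,b}$ ($b\le p_2$); compositions $\vec n_\ell\in\mathbb N^{p_\ell}$; each $i\in\mathbb Z_+$ is uniquely $i=q|\vec n_\ell|+n_{\ell,1}+\dots+n_{\ell,a-1}+r$ ($0\le r<n_{\ell,a}$), $a_\ell(i)=a$, $k_\ell(i)=qn_{\ell,a}+r$; moment matrix $g_{i,j}=\int x^{k_1(i)+k_2(j)}w_{1,a_1(i)}w_{2,a_2(j)}d\mu$. All series and integrals involved (including those with the exponential factors) are assumed convergent, e.g. as when $\mu$ has bounded support. $e_{\ell,a}(k)=e_i$ for the unique $i$ with $a_\ell(i)=a,k_\ell(i)=k$; $\Lambda_{\ell,a}=\sum_ke_{\ell,a}(k)e_{\ell,a}(k+1)^\top$. $W_0(t)=\exp\big(\sum_{a=1}^{p_1}\sum_{j\ge1}t_{j,a}\Lambda_{1,a}^j\big)$ (upper triangular) and $\bar W_0(t)=\exp\big(\sum_{b=1}^{p_2}\sum_{j\ge1}\bar t_{j,b}(\Lambda_{2,b}^\top)^j\big)$ (lower triangular); each entry of these exponentials is a finite polynomial in the times. *)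

theory Defs
  imports "HOL-Analysis.Analysis"
begin

text \<open>Infinite matrices indexed by nat (rows/columns start at 0).\<close>
type_synonym imat = "nat \<Rightarrow> nat \<Rightarrow> real"

definition imult :: "imat \<Rightarrow> imat \<Rightarrow> imat" where
  "imult A B = (\<lambda>i j. \<Sum>l. A i l * B l j)"

definition iid :: imat where
  "iid = (\<lambda>i j. if i = j then 1 else 0)"

fun ipow :: "imat \<Rightarrow> nat \<Rightarrow> imat" where
  "ipow A 0 = iid"
| "ipow A (Suc n) = imult (ipow A n) A"

definition iexp :: "imat \<Rightarrow> imat" where
  "iexp A = (\<lambda>i j. \<Sum>n. ipow A n i j / fact n)"

definition itrans :: "imat \<Rightarrow> imat" where
  "itrans A = (\<lambda>i j. A j i)"

definition lower_tri :: "imat \<Rightarrow> bool" where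
  "lower_tri A \<longleftrightarrow> (\<forall>i j. i < j \<longrightarrow> A i j = 0)"

definition iinv_lower :: "imat \<Rightarrow> imat" where
  "iinv_lower A = (THE B. lower_tri B \<and> imult A B = iid \<and> imult B A = iid)"

text \<open>Composition \<open>n\<close> with entries \<open>n 1, ..., n p\<close>; \<open>|n|\<close>.\<close>
definition comp_len :: "(nat \<Rightarrow> nat) \<Rightarrow> nat \<Rightarrow> nat" where
  "comp_len n p = (\<Sum>b=1..p. n b)"

definition decomp :: "(nat \<Rightarrow> nat) \<Rightarrow> nat \<Rightarrow> nat \<Rightarrow> nat \<times> nat" where
  "decomp n p i = (THE ak. \<exists>q r. 1 \<le> fst ak \<and> fst ak \<le> p \<and> r < n (fst ak) \<and>
      i = q * comp_len n p + (\<Sum>b=1..<fst ak. n b) + r \<and> snd ak = q * n (fst ak) + r)"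

definition mo_a :: "(nat \<Rightarrow> nat) \<Rightarrow> nat \<Rightarrow> nat \<Rightarrow> nat" where
  "mo_a n p i = fst (decomp n p i)"

definition mo_k :: "(nat \<Rightarrow> nat) \<Rightarrow> nat \<Rightarrow> nat \<Rightarrow> nat" where
  "mo_k n p i = snd (decomp n p i)"

text \<open>\<open>\<Lambda>_a = \<Sum>_k e_a(k) e_a(k+1)^T\<close>, where \<open>e_a(k) = e_i\<close> for the unique \<open>i\<close>
  with \<open>a(i) = a\<close>, \<open>k(i) = k\<close>.\<close>
definition shiftmat :: "(nat \<Rightarrow> nat) \<Rightarrow> nat \<Rightarrow> nat \<Rightarrow> imat" where
  "shiftmat n p a = (\<lambda>i i'. if mo_a n p i = a \<and> mo_a n p i' = a \<and> mo_k n p i' = Suc (mo_k n p i)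
                             then 1 else 0)"

text \<open>Times: \<open>t j a\<close> stands for \<open>t_{j,a}\<close> (only \<open>j \<ge> 1\<close> is used).\<close>
definition W0 :: "(nat \<Rightarrow> nat) \<Rightarrow> nat \<Rightarrow> (nat \<Rightarrow> nat \<Rightarrow> real) \<Rightarrow> imat" where
  "W0 n1 p1 t = iexp (\<lambda>i i'. \<Sum>a=1..p1. \<Sum>j. t (Suc j) a * ipow (shiftmat n1 p1 a) (Suc j) i i')"

definition Wbar0 :: "(nat \<Rightarrow> nat) \<Rightarrow> nat \<Rightarrow> (nat \<Rightarrow> nat \<Rightarrow> real) \<Rightarrow> imat" where
  "Wbar0 n2 p2 tb = iexp (\<lambda>i i'. \<Sum>b=1..p2. \<Sum>j. tb (Suc j) b * ipow (itrans (shiftmat n2 p2 b)) (Suc j) i i')"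

definition moment_matrix :: "real measure \<Rightarrow> (nat \<Rightarrow> nat) \<Rightarrow> nat \<Rightarrow> (nat \<Rightarrow> nat) \<Rightarrow> nat \<Rightarrow>
    (nat \<Rightarrow> real \<Rightarrow> real) \<Rightarrow> (nat \<Rightarrow> real \<Rightarrow> real) \<Rightarrow> imat" where
  "moment_matrix M n1 p1 n2 p2 w1 w2 = (\<lambda>i j.
     LINT x|M. x ^ (mo_k n1 p1 i + mo_k n2 p2 j) * w1 (mo_a n1 p1 i) x * w2 (mo_a n2 p2 j) x)"

end

theory Submission
  imports Defs "HOL-Computational_Algebra.Formal_Power_Series"
begin


no_notation vec_nth (infixl \<open>$\<close> 90)
notation fps_nth (infixl \<open>$\<close> 75)


definition psum :: "(nat \<Rightarrow> nat) \<Rightarrow> nat \<Rightarrow> nat" where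
  "psum n a = (\<Sum>b=1..<a. n b)"

definition idx :: "(nat \<Rightarrow> nat) \<Rightarrow> nat \<Rightarrow> nat \<Rightarrow> nat \<Rightarrow> nat" where
  "idx n p a k = (k div n a) * comp_len n p + psum n a + k mod n a"

definition okc :: "(nat \<Rightarrow> nat) \<Rightarrow> nat \<Rightarrow> bool" where
  "okc n p \<longleftrightarrow> p \<ge> 1 \<and> (\<forall>a\<in>{1..p}. n a \<ge> 1)"

lemma psum_Suc: "1 \<le> a \<Longrightarrow> psum n (Suc a) = psum n a + n a"
  unfolding psum_def by simp

lemma psum_mono: "a \<le> b \<Longrightarrow> psum n a \<le> psum n b"
  unfolding psum_def by (intro sum_mono2) auto

lemma psum_lt: "1 \<le> a \<Longrightarrow> a < b \<Longrightarrow> psum n a + n a \<le> psum n b"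
  using psum_Suc[of a n] psum_mono[of "Suc a" b n] by simp

lemma comp_len_psum: "p \<ge> 1 \<Longrightarrow> comp_len n p = psum n (Suc p)"
  unfolding comp_len_def psum_def
  by (metis atLeastLessThanSuc_atLeastAtMost)

lemma psum_r_lt:
  assumes "a \<in> {1..p}" "r < n a"
  shows "psum n a + r < comp_len n p"
proof -
  have "psum n a + n a \<le> psum n (Suc p)"
    using assms(1) psum_Suc[of a n] psum_mono[of "Suc a" "Suc p" n] by auto
  then show ?thesis using assms comp_len_psum[of p n] by auto
qed

lemma decomp_unique_aux:
  assumes "a \<in> {1..p}" "r < n a" "a' \<in> {1..p}" "r' < n a'"
    and "q * comp_len n p + psum n a + r = q' * comp_len n p + psum n a' + r'"
  shows "a = a' \<and> q = q' \<and> r = r'"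
proof -
  let ?L = "comp_len n p"
  have l1: "psum n a + r < ?L" and l2: "psum n a' + r' < ?L"
    using psum_r_lt assms by auto
  have e1: "(q * ?L + (psum n a + r)) div ?L = q" and e1': "(q * ?L + (psum n a + r)) mod ?L = psum n a + r"
    using l1 by auto
  have e2: "(q' * ?L + (psum n a' + r')) div ?L = q'" and e2': "(q' * ?L + (psum n a' + r')) mod ?L = psum n a' + r'"
    using l2 by auto
  have qq: "q = q'" using e1 e2 assms(5) by (simp add: add.assoc)
  have rr: "psum n a + r = psum n a' + r'" by (metis e1' e2' assms(5) add.assoc)
  have aa: "a = a'"
  proof (rule ccontr)
    assume "a \<noteq> a'"
    then consider "a < a'" | "a' < a" by linarith
    then show False
    proof cases
      case 1 then show False using psum_lt[of a a' n] assms rr by auto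
    next
      case 2 then show False using psum_lt[of a' a n] assms rr by auto
    qed
  qed
  show ?thesis using qq rr aa by auto
qed

lemma decomp_idx:
  assumes ok: "okc n p" and a: "a \<in> {1..p}"
  shows "decomp n p (idx n p a k) = (a, k)"
  unfolding decomp_def
proof (rule the_equality)
  have na: "n a \<ge> 1" using ok a unfolding okc_def by auto
  show "\<exists>q r. 1 \<le> fst (a, k) \<and> fst (a, k) \<le> p \<and> r < n (fst (a, k)) \<and>
        idx n p a k = q * comp_len n p + (\<Sum>b = 1..<fst (a, k). n b) + r \<and> snd (a, k) = q * n (fst (a, k)) + r"
    using a na by (intro exI[of _ "k div n a"] exI[of _ "k mod n a"]) (auto simp: idx_def psum_def)
next
  fix ak assume "\<exists>q r. 1 \<le> fst ak \<and> fst ak \<le> p \<and> r < n (fst ak) \<and>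
        idx n p a k = q * comp_len n p + (\<Sum>b = 1..<fst ak. n b) + r \<and> snd ak = q * n (fst ak) + r"
  then obtain q r where h: "1 \<le> fst ak" "fst ak \<le> p" "r < n (fst ak)"
    "idx n p a k = q * comp_len n p + psum n (fst ak) + r" "snd ak = q * n (fst ak) + r"
    unfolding psum_def by blast
  have na: "n a \<ge> 1" using ok a unfolding okc_def by auto
  have "k mod n a < n a" using na by auto
  from decomp_unique_aux[of a p "k mod n a" n "fst ak" r "k div n a" q] a this h
  have "a = fst ak \<and> k div n a = q \<and> k mod n a = r" unfolding idx_def by auto
  then have "snd ak = k" using h(5) by (metis div_mult_mod_eq mult.commute)
  then show "ak = (a, k)" using \<open>a = fst ak \<and> _\<close> by (cases ak) auto
qed

lemma idx_surj:
  assumes ok: "okc n p"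
  shows "\<exists>a k. a \<in> {1..p} \<and> i = idx n p a k"
proof -
  let ?L = "comp_len n p"
  have p1: "p \<ge> 1" using ok unfolding okc_def by auto
  have Lpos: "?L > 0"
  proof -
    have "n 1 \<ge> 1" using ok p1 unfolding okc_def by auto
    then have "psum n 1 + 0 < ?L" using psum_r_lt[of 1 p 0 n] p1 by auto
    then show ?thesis by simp
  qed
  define q where "q = i div ?L"
  define \<rho> where "\<rho> = i mod ?L"
  have rho: "\<rho> < ?L" using Lpos \<rho>_def by auto
  define S where "S = {a\<in>{1..p}. psum n a \<le> \<rho>}"
  have "1 \<in> S" using p1 unfolding S_def psum_def by auto
  have finS: "finite S" unfolding S_def by auto
  define a where "a = Max S"
  have aS: "a \<in> S" using Max_in[OF finS] \<open>1 \<in> S\<close> a_def by auto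
  have a1: "a \<in> {1..p}" and pa: "psum n a \<le> \<rho>" using aS S_def by auto
  have up: "\<rho> < psum n a + n a"
  proof (cases "a < p")
    case True
    have "Suc a \<notin> S"
      using Max_ge[OF finS, of "Suc a"] a_def by auto
    then have "\<not> psum n (Suc a) \<le> \<rho>" using True a1 unfolding S_def by auto
    then show ?thesis using psum_Suc[of a n] a1 by auto
  next
    case False
    then have "a = p" using a1 by auto
    then show ?thesis using rho comp_len_psum[OF p1, of n] psum_Suc[of p n] p1 by auto
  qed
  define r where "r = \<rho> - psum n a"
  have r: "r < n a" using up pa r_def by auto
  define k where "k = q * n a + r"
  have "k div n a = q" "k mod n a = r" using r unfolding k_def by auto
  then have "idx n p a k = q * ?L + psum n a + r" unfolding idx_def by simp
  also have "\<dots> = i" using pa unfolding r_def q_def \<rho>_def by (simp add: mult.commute)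
  finally show ?thesis using a1 by auto
qed

lemma mo_idx:
  assumes "okc n p" "a \<in> {1..p}"
  shows "mo_a n p (idx n p a k) = a" "mo_k n p (idx n p a k) = k"
  using decomp_idx[OF assms] unfolding mo_a_def mo_k_def by auto

lemma mo_props:
  assumes "okc n p"
  shows "mo_a n p i \<in> {1..p}" "idx n p (mo_a n p i) (mo_k n p i) = i"
proof -
  obtain a k where "a \<in> {1..p}" "i = idx n p a k" using idx_surj[OF assms] by blast
  then show "mo_a n p i \<in> {1..p}" "idx n p (mo_a n p i) (mo_k n p i) = i"
    using mo_idx[OF assms] by auto
qed

lemma idx_mono:
  assumes ok: "okc n p" and a: "a \<in> {1..p}" and kk: "k < k'"
  shows "idx n p a k < idx n p a k'"
proof -
  have na: "n a \<ge> 1" using ok a unfolding okc_def by auto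
  let ?L = "comp_len n p"
  have le: "k div n a \<le> k' div n a" using kk by (simp add: div_le_mono)
  show ?thesis
  proof (cases "k div n a = k' div n a")
    case True
    then have "k mod n a < k' mod n a"
      using kk by (metis div_mult_mod_eq nat_add_left_cancel_less)
    then show ?thesis using True unfolding idx_def by simp
  next
    case False
    then have "Suc (k div n a) \<le> k' div n a" using le by auto
    then have "Suc (k div n a) * ?L \<le> k' div n a * ?L" by (rule mult_right_mono) simp
    moreover have "psum n a + k mod n a < ?L" using psum_r_lt[OF a] na by auto
    ultimately show ?thesis unfolding idx_def by simp
  qed
qed

lemma idx_strict_mono: "okc n p \<Longrightarrow> a \<in> {1..p} \<Longrightarrow> strict_mono (idx n p a)"
  by (simp add: strict_mono_def idx_mono)

lemma idx_le_iff: "okc n p \<Longrightarrow> a \<in> {1..p} \<Longrightarrow> idx n p a k \<le> idx n p a k' \<longleftrightarrow> k \<le> k'"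
  using idx_strict_mono strict_mono_less_eq by blast

lemma idx_inj: "okc n p \<Longrightarrow> a \<in> {1..p} \<Longrightarrow> idx n p a k = idx n p a k' \<longleftrightarrow> k = k'"
  using idx_strict_mono strict_mono_eq by blast

lemma mo_eq_iff:
  assumes "okc n p"
  shows "i = j \<longleftrightarrow> mo_a n p i = mo_a n p j \<and> mo_k n p i = mo_k n p j"
  using mo_props[OF assms] by metis



definition U :: "(nat \<Rightarrow> nat) \<Rightarrow> nat \<Rightarrow> (nat \<Rightarrow> real fps) \<Rightarrow> imat" where
  "U n p F = (\<lambda>i j. if mo_a n p i = mo_a n p j \<and> mo_k n p i \<le> mo_k n p j
      then F (mo_a n p i) $ (mo_k n p j - mo_k n p i) else 0)"

lemma U_idx:
  assumes "okc n p" "a \<in> {1..p}"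
  shows "U n p F (idx n p a r) j = (if a = mo_a n p j \<and> r \<le> mo_k n p j then F a $ (mo_k n p j - r) else 0)"
    "U n p F i (idx n p a r) = (if mo_a n p i = a \<and> mo_k n p i \<le> r then F a $ (r - mo_k n p i) else 0)"
  using mo_idx[OF assms] unfolding U_def by auto

lemma U_mult:
  assumes ok: "okc n p"
  shows "imult (U n p F) (U n p G) = U n p (\<lambda>a. F a * G a)"
proof (intro ext)
  fix i j
  define a where "a = mo_a n p i"
  define k where "k = mo_k n p i"
  define k' where "k' = mo_k n p j"
  have a: "a \<in> {1..p}" using mo_props[OF ok] a_def by auto
  have ai: "mo_a n p i = a" and ki: "mo_k n p i = k" and kj: "mo_k n p j = k'"
    using a_def k_def k'_def by auto
  have supp: "U n p F i l * U n p G l j = 0" if "l \<notin> idx n p a ` {k..k'}" for l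
  proof (rule ccontr)
    assume "U n p F i l * U n p G l j \<noteq> 0"
    then have "mo_a n p l = a" "k \<le> mo_k n p l" "mo_k n p l \<le> k'"
      unfolding U_def a_def k_def k'_def by (auto split: if_splits)
    then have "l \<in> idx n p a ` {k..k'}" using mo_props(2)[OF ok, of l]
      by (metis atLeastAtMost_iff image_eqI)
    then show False using that by auto
  qed
  have "imult (U n p F) (U n p G) i j = (\<Sum>l\<in>idx n p a ` {k..k'}. U n p F i l * U n p G l j)"
    unfolding imult_def by (rule suminf_finite) (use supp in auto)
  also have "\<dots> = (\<Sum>r\<in>{k..k'}. U n p F i (idx n p a r) * U n p G (idx n p a r) j)"
    by (rule sum.reindex[unfolded comp_def]) (meson idx_strict_mono[OF ok a] strict_mono_imp_inj_on)
  also have "\<dots> = (\<Sum>r\<in>{k..k'}. F a $ (r - k) * (if a = mo_a n p j then G a $ (k' - r) else 0))"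
    by (intro sum.cong refl) (auto simp: U_idx[OF ok a] ai ki kj)
  also have "\<dots> = U n p (\<lambda>a. F a * G a) i j"
  proof (cases "a = mo_a n p j \<and> k \<le> k'")
    case True
    have "(\<Sum>r\<in>{k..k'}. F a $ (r - k) * G a $ (k' - r))
        = (\<Sum>s\<in>{0..k'-k}. F a $ s * G a $ (k' - k - s))"
    proof -
      have "{k..k'} = {0 + k..(k' - k) + k}" using True by auto
      then have "(\<Sum>r\<in>{k..k'}. F a $ (r - k) * G a $ (k' - r))
         = (\<Sum>s\<in>{0..k'-k}. F a $ (s + k - k) * G a $ (k' - (s + k)))"
        by (simp only: sum.shift_bounds_cl_nat_ivl)
      then show ?thesis by (simp add: diff_diff_add add.commute)
    qed
    then show ?thesis using True unfolding U_def a_def k_def k'_def by (simp add: fps_mult_nth)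
  next
    case False
    then show ?thesis unfolding U_def a_def k_def k'_def by auto
  qed
  finally show "imult (U n p F) (U n p G) i j = U n p (\<lambda>a. F a * G a) i j" .
qed

lemma U_one:
  assumes ok: "okc n p"
  shows "U n p (\<lambda>_. 1) = iid"
proof (intro ext)
  fix i j
  show "U n p (\<lambda>_. 1) i j = iid i j"
  proof (cases "i = j")
    case True then show ?thesis by (simp add: U_def iid_def)
  next
    case False
    then have "\<not> (mo_a n p i = mo_a n p j \<and> mo_k n p i = mo_k n p j)" using mo_eq_iff[OF ok] by blast
    then show ?thesis using False by (auto simp: U_def iid_def)
  qed
qed

lemma U_pow:
  assumes ok: "okc n p"
  shows "ipow (U n p F) m = U n p (\<lambda>a. F a ^ m)"
  by (induction m) (simp_all add: U_one[OF ok] U_mult[OF ok] mult.commute)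

lemma U_exp:
  assumes ok: "okc n p" and F0: "\<And>a. F a $ 0 = 0"
  shows "iexp (U n p F) = U n p (\<lambda>a. fps_exp 1 oo F a)"
proof (intro ext)
  fix i j
  show "iexp (U n p F) i j = U n p (\<lambda>a. fps_exp 1 oo F a) i j"
  proof (cases "mo_a n p i = mo_a n p j \<and> mo_k n p i \<le> mo_k n p j")
    case True
    define m where "m = mo_k n p j - mo_k n p i"
    define a where "a = mo_a n p i"
    have "iexp (U n p F) i j = (\<Sum>e. (F a ^ e) $ m / fact e)"
      unfolding iexp_def U_pow[OF ok] using True by (simp add: U_def a_def m_def)
    also have "\<dots> = (\<Sum>e\<in>{0..m}. (F a ^ e) $ m / fact e)"
      by (rule suminf_finite) (auto simp: startsby_zero_power_prefix[OF F0])
    also have "\<dots> = (fps_exp 1 oo F a) $ m"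
      by (simp add: fps_compose_nth)
    finally show ?thesis using True by (simp add: U_def a_def m_def)
  next
    case False
    have "ipow (U n p F) e i j = 0" for e using False by (subst U_pow[OF ok]) (auto simp: U_def)
    moreover have "U n p (\<lambda>a. fps_exp 1 oo F a) i j = 0" using False by (auto simp: U_def)
    ultimately show ?thesis unfolding iexp_def by simp
  qed
qed



definition Tf :: "(nat \<Rightarrow> nat \<Rightarrow> real) \<Rightarrow> nat \<Rightarrow> real fps" where
  "Tf t a = Abs_fps (\<lambda>m. if m = 0 then 0 else t m a)"

lemma Tf0[simp]: "Tf t a $ 0 = 0"
  by (simp add: Tf_def)

lemma Tf_nth: "Tf t a $ m = (if m = 0 then 0 else t m a)"
  by (simp add: Tf_def)

lemma shift_U:
  assumes ok: "okc n p"
  shows "shiftmat n p a = U n p (\<lambda>a'. if a' = a then fps_X else 0)"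
  unfolding shiftmat_def U_def by (intro ext) auto

lemma shift_pow:
  assumes ok: "okc n p"
  shows "ipow (shiftmat n p a) (Suc j) = U n p (\<lambda>a'. if a' = a then fps_X ^ Suc j else 0)"
proof -
  have "(\<lambda>a'. (if a' = a then fps_X else 0) ^ Suc j) = (\<lambda>a'. if a' = a then (fps_X::real fps) ^ Suc j else 0)"
    by auto
  then show ?thesis by (simp only: shift_U[OF ok] U_pow[OF ok])
qed

lemma expo_U:
  assumes ok: "okc n p"
  shows "(\<lambda>i i'. \<Sum>a=1..p. \<Sum>j. t (Suc j) a * ipow (shiftmat n p a) (Suc j) i i') = U n p (Tf t)"
proof (intro ext)
  fix i i'
  define m where "m = mo_k n p i' - mo_k n p i"
  define ai where "ai = mo_a n p i"
  have ai: "ai \<in> {1..p}" using mo_props[OF ok] ai_def by auto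
  show "(\<Sum>a=1..p. \<Sum>j. t (Suc j) a * ipow (shiftmat n p a) (Suc j) i i') = U n p (Tf t) i i'"
  proof (cases "mo_a n p i = mo_a n p i' \<and> mo_k n p i \<le> mo_k n p i'")
    case True
    have inner: "(\<Sum>j. t (Suc j) a * ipow (shiftmat n p a) (Suc j) i i') = (if ai = a \<and> m \<noteq> 0 then t m a else 0)" for a
    proof -
      have "(\<Sum>j. t (Suc j) a * ipow (shiftmat n p a) (Suc j) i i') = (\<Sum>j\<in>{m - 1}. t (Suc j) a * ipow (shiftmat n p a) (Suc j) i i')"
        by (rule suminf_finite) (use True in \<open>auto simp: shift_pow[OF ok] U_def m_def simp del: ipow.simps\<close>)
      also have "\<dots> = (if ai = a \<and> m \<noteq> 0 then t m a else 0)"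
        using True by (auto simp: shift_pow[OF ok] U_def m_def ai_def Suc_diff_Suc simp del: ipow.simps)
      finally show ?thesis .
    qed
    have "(\<Sum>a=1..p. \<Sum>j. t (Suc j) a * ipow (shiftmat n p a) (Suc j) i i') = (\<Sum>a=1..p. if ai = a \<and> m \<noteq> 0 then t m a else 0)"
      by (simp only: inner)
    also have "\<dots> = (if m \<noteq> 0 then t m ai else 0)"
      using ai by (cases "m = 0") (simp_all add: sum.delta)
    also have "\<dots> = U n p (Tf t) i i'"
      using True by (simp add: U_def Tf_nth m_def ai_def)
    finally show ?thesis .
  next
    case False
    then show ?thesis by (auto simp: shift_pow[OF ok] U_def simp del: ipow.simps)
  qed
qed

definition L :: "(nat \<Rightarrow> nat) \<Rightarrow> nat \<Rightarrow> (nat \<Rightarrow> real fps) \<Rightarrow> imat" where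
  "L n p F = itrans (U n p F)"

lemma imult_itrans: "imult (itrans A) (itrans B) = itrans (imult B A)"
  unfolding imult_def itrans_def by (simp add: mult.commute)

lemma itrans_iid: "itrans iid = iid"
  unfolding itrans_def iid_def by (intro ext) auto

lemma L_mult:
  assumes ok: "okc n p"
  shows "imult (L n p F) (L n p G) = L n p (\<lambda>a. F a * G a)"
  unfolding L_def imult_itrans U_mult[OF ok] by (simp add: mult.commute)

lemma L_one: "okc n p \<Longrightarrow> L n p (\<lambda>_. 1) = iid"
  unfolding L_def by (simp add: U_one itrans_iid)

lemma L_pow:
  assumes ok: "okc n p"
  shows "ipow (L n p F) m = L n p (\<lambda>a. F a ^ m)"
  by (induction m) (simp_all add: L_one[OF ok] L_mult[OF ok] mult.commute)

lemma L_pow': "okc n p \<Longrightarrow> ipow (itrans (U n p F)) m = itrans (U n p (\<lambda>a. F a ^ m))"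
  using L_pow[unfolded L_def] by blast

lemma ipow_itrans_shift:
  assumes ok: "okc n p"
  shows "ipow (itrans (shiftmat n p a)) m = itrans (ipow (shiftmat n p a) m)"
  by (simp only: shift_U[OF ok] L_pow'[OF ok] U_pow[OF ok])

lemma expo_L:
  assumes ok: "okc n p"
  shows "(\<lambda>i i'. \<Sum>a=1..p. \<Sum>j. t (Suc j) a * ipow (itrans (shiftmat n p a)) (Suc j) i i') = L n p (Tf t)"
proof (intro ext)
  fix i i'
  have "(\<Sum>a=1..p. \<Sum>j. t (Suc j) a * ipow (itrans (shiftmat n p a)) (Suc j) i i')
      = (\<Sum>a=1..p. \<Sum>j. t (Suc j) a * ipow (shiftmat n p a) (Suc j) i' i)"
    unfolding ipow_itrans_shift[OF ok] by (simp add: itrans_def)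
  also have "\<dots> = U n p (Tf t) i' i"
    using fun_cong[OF fun_cong[OF expo_U[OF ok, of t]], of i' i] by simp
  finally show "(\<Sum>a=1..p. \<Sum>j. t (Suc j) a * ipow (itrans (shiftmat n p a)) (Suc j) i i') = L n p (Tf t) i i'"
    by (simp add: L_def itrans_def)
qed

lemma L_exp:
  assumes ok: "okc n p" and F0: "\<And>a. F a $ 0 = 0"
  shows "iexp (L n p F) = L n p (\<lambda>a. fps_exp 1 oo F a)"
proof (intro ext)
  fix i j
  have "iexp (L n p F) i j = iexp (U n p F) j i"
    unfolding iexp_def L_pow[OF ok] U_pow[OF ok] by (simp add: L_def itrans_def)
  then show "iexp (L n p F) i j = L n p (\<lambda>a. fps_exp 1 oo F a) i j"
    by (simp add: U_exp[OF ok F0] L_def itrans_def)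
qed

lemma W0_eq: "okc n p \<Longrightarrow> W0 n p t = U n p (\<lambda>a. fps_exp 1 oo Tf t a)"
  unfolding W0_def expo_U by (rule U_exp) simp_all

lemma Wbar0_eq: "okc n p \<Longrightarrow> Wbar0 n p t = L n p (\<lambda>a. fps_exp 1 oo Tf t a)"
  unfolding Wbar0_def expo_L by (rule L_exp) simp_all




lemma lower_L:
  assumes ok: "okc n p"
  shows "lower_tri (L n p F)"
  unfolding lower_tri_def
proof (intro allI impI)
  fix i j :: nat assume ij: "i < j"
  show "L n p F i j = 0"
  proof (rule ccontr)
    assume "L n p F i j \<noteq> 0"
    then have h: "mo_a n p j = mo_a n p i" "mo_k n p j \<le> mo_k n p i"
      unfolding L_def itrans_def U_def by (auto split: if_splits)
    have "idx n p (mo_a n p i) (mo_k n p j) \<le> idx n p (mo_a n p i) (mo_k n p i)"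
      using idx_le_iff[OF ok mo_props(1)[OF ok]] h by auto
    then have "j \<le> i" using mo_props(2)[OF ok, of i] mo_props(2)[OF ok, of j] h by metis
    then show False using ij by auto
  qed
qed

lemma imult_lower: "lower_tri X \<Longrightarrow> imult X Y i j = (\<Sum>l\<le>i. X i l * Y l j)"
  unfolding imult_def lower_tri_def by (rule suminf_finite) auto

lemma lower_imult: "lower_tri X \<Longrightarrow> lower_tri Y \<Longrightarrow> lower_tri (imult X Y)"
  unfolding lower_tri_def
  by (auto simp: imult_lower[unfolded lower_tri_def] intro!: sum.neutral)

lemma assoc_lower:
  assumes X: "lower_tri X" and Y: "lower_tri Y"
  shows "imult (imult X Y) Z = imult X (imult Y Z)"
proof (intro ext)
  fix i j
  have "imult (imult X Y) Z i j = (\<Sum>l\<le>i. (\<Sum>m\<le>i. X i m * Y m l) * Z l j)"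
    by (simp add: imult_lower[OF lower_imult[OF X Y]] imult_lower[OF X])
  also have "\<dots> = (\<Sum>l\<le>i. \<Sum>m\<le>i. X i m * Y m l * Z l j)"
    by (simp add: sum_distrib_right)
  also have "\<dots> = (\<Sum>m\<le>i. \<Sum>l\<le>i. X i m * Y m l * Z l j)"
    by (rule sum.swap)
  also have "\<dots> = (\<Sum>m\<le>i. X i m * (\<Sum>l\<le>m. Y m l * Z l j))"
  proof (intro sum.cong refl)
    fix m assume m: "m \<in> {..i}"
    have "(\<Sum>l\<le>i. Y m l * Z l j) = (\<Sum>l\<le>m. Y m l * Z l j)"
      using m Y unfolding lower_tri_def by (intro sum.mono_neutral_right) auto
    moreover have "(\<Sum>l\<le>i. X i m * Y m l * Z l j) = X i m * (\<Sum>l\<le>i. Y m l * Z l j)"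
      by (simp add: sum_distrib_left mult.assoc)
    ultimately show "(\<Sum>l\<le>i. X i m * Y m l * Z l j) = X i m * (\<Sum>l\<le>m. Y m l * Z l j)"
      by simp
  qed
  also have "\<dots> = imult X (imult Y Z) i j"
    by (simp add: imult_lower[OF X] imult_lower[OF Y])
  finally show "imult (imult X Y) Z i j = imult X (imult Y Z) i j" .
qed

lemma imult_iid_right: "imult X iid = X"
proof (intro ext)
  fix i j
  show "imult X iid i j = X i j"
    unfolding imult_def iid_def
    by (subst suminf_finite[of "{j}"]) auto
qed

lemma imult_iid_left: "imult iid X = X"
proof (intro ext)
  fix i j
  show "imult iid X i j = X i j"
    unfolding imult_def iid_def
    by (subst suminf_finite[of "{i}"]) auto
qed

lemma iinv_L:
  assumes ok: "okc n p" and CD: "\<And>b. C b * D b = 1"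
  shows "iinv_lower (L n p C) = L n p D"
  unfolding iinv_lower_def
proof (rule the_equality)
  have 1: "imult (L n p C) (L n p D) = iid" by (simp add: L_mult[OF ok] CD L_one[OF ok])
  have 2: "imult (L n p D) (L n p C) = iid" by (simp add: L_mult[OF ok] CD mult.commute L_one[OF ok])
  show "lower_tri (L n p D) \<and> imult (L n p C) (L n p D) = iid \<and> imult (L n p D) (L n p C) = iid"
    using 1 2 lower_L[OF ok] by auto
  fix B assume B: "lower_tri B \<and> imult (L n p C) B = iid \<and> imult B (L n p C) = iid"
  have "B = imult B (imult (L n p C) (L n p D))" by (simp add: 1 imult_iid_right)
  also have "\<dots> = imult (imult B (L n p C)) (L n p D)"
    using assoc_lower[of B "L n p C"] B lower_L[OF ok] by metis
  also have "\<dots> = L n p D" using B by (simp add: imult_iid_left)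
  finally show "B = L n p D" .
qed




lemma fps_neg_pow_nth: "((- T) ^ i) $ m = (-1) ^ i * ((T::real fps) ^ i $ m)"
proof (induction i arbitrary: m)
  case 0 then show ?case by simp
next
  case (Suc i)
  have "((- T) ^ Suc i) $ m = (\<Sum>r=0..m. (- T) $ r * ((- T) ^ i) $ (m - r))"
    by (simp only: power_Suc fps_mult_nth)
  also have "\<dots> = (\<Sum>r=0..m. (-1) ^ Suc i * (T $ r * (T ^ i) $ (m - r)))"
  proof (intro sum.cong refl)
    fix r
    have "(- T) $ r * ((- T) ^ i) $ (m - r) = - (T $ r * ((-1) ^ i * (T ^ i) $ (m - r)))"
      by (simp only: Suc.IH fps_neg_nth mult_minus_left)
    then show "(- T) $ r * ((- T) ^ i) $ (m - r) = (-1) ^ Suc i * (T $ r * (T ^ i) $ (m - r))"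
      by simp
  qed
  also have "\<dots> = (-1) ^ Suc i * (\<Sum>r=0..m. T $ r * (T ^ i) $ (m - r))"
    by (simp only: sum_distrib_left)
  also have "\<dots> = (-1) ^ Suc i * ((T ^ Suc i) $ m)"
    by (simp only: power_Suc[of T] fps_mult_nth)
  finally show ?case .
qed

lemma exp_neg_compose: "fps_exp 1 oo (- T) = fps_exp (-1) oo (T::real fps)"
proof (rule fps_ext)
  fix n
  show "(fps_exp 1 oo - T) $ n = (fps_exp (-1) oo T) $ n"
    unfolding fps_compose_nth fps_exp_nth fps_neg_pow_nth by (intro sum.cong refl) simp
qed

lemma exp_compose_inv:
  assumes "T $ 0 = 0"
  shows "(fps_exp 1 oo T) * (fps_exp 1 oo (- T)) = (1::real fps)"
proof -
  have e: "fps_exp 1 * fps_exp (-1) = (1 :: real fps)"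
    using fps_exp_add_mult[of "1::real" "-1"] by simp
  have "(fps_exp 1 oo T) * (fps_exp 1 oo (- T)) = (fps_exp 1 oo T) * (fps_exp (-1) oo T)"
    by (simp only: exp_neg_compose)
  also have "\<dots> = (fps_exp 1 * fps_exp (-1)) oo T"
    by (rule fps_compose_mult_distrib[OF assms, symmetric])
  also have "\<dots> = 1" by (simp only: e fps_compose_1)
  finally show ?thesis .
qed



lemma pow_sums:
  fixes T :: "real fps" and x :: real
  assumes S: "summable (\<lambda>j. norm (T $ j * x ^ j))"
  shows "(\<lambda>m. (T ^ i) $ m * x ^ m) sums ((\<Sum>j. T $ j * x ^ j) ^ i) \<and>
         summable (\<lambda>m. norm ((T ^ i) $ m * x ^ m)) \<and>
         (\<Sum>m. norm ((T ^ i) $ m * x ^ m)) \<le> (\<Sum>j. norm (T $ j * x ^ j)) ^ i"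
proof (induction i)
  case 0
  have e: "(\<lambda>m. (T ^ 0) $ m * x ^ m) = (\<lambda>m. if m = 0 then 1 else 0)" by auto
  have e2: "(\<lambda>m. norm ((T ^ 0) $ m * x ^ m)) = (\<lambda>m. if m = 0 then 1 else 0)" by auto
  have s1: "(\<lambda>m. if m = 0 then 1 else 0 :: real) sums 1"
    using sums_single[of 0 "\<lambda>_. 1::real"] by simp
  show ?case unfolding e e2 using s1 by (auto simp: sums_iff)
next
  case (Suc i)
  define a where "a = (\<lambda>r. T $ r * x ^ r)"
  define b where "b = (\<lambda>r. (T ^ i) $ r * x ^ r)"
  have IH1: "b sums ((\<Sum>j. T $ j * x ^ j) ^ i)" and IH2: "summable (\<lambda>m. norm (b m))"
    and IH3: "(\<Sum>m. norm (b m)) \<le> (\<Sum>j. norm (T $ j * x ^ j)) ^ i"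
    using Suc unfolding b_def by auto
  have Sa: "summable (\<lambda>r. norm (a r))" using S unfolding a_def .
  have eq: "(T ^ Suc i) $ m * x ^ m = (\<Sum>r\<le>m. a r * b (m - r))" for m
  proof -
    have "(T ^ Suc i) $ m * x ^ m = (\<Sum>r\<le>m. T $ r * (T ^ i) $ (m - r) * x ^ m)"
      by (simp add: fps_mult_nth atLeast0AtMost sum_distrib_right)
    also have "\<dots> = (\<Sum>r\<le>m. a r * b (m - r))"
    proof (intro sum.cong refl)
      fix r assume "r \<in> {..m}"
      then have "x ^ m = x ^ r * x ^ (m - r)" by (simp add: power_add[symmetric])
      then show "T $ r * (T ^ i) $ (m - r) * x ^ m = a r * b (m - r)"
        unfolding a_def b_def by (simp add: mult_ac)
    qed
    finally show ?thesis .
  qed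
  have c1: "(\<lambda>m. \<Sum>r\<le>m. a r * b (m - r)) sums ((\<Sum>k. a k) * (\<Sum>k. b k))"
    by (rule Cauchy_product_sums[OF Sa IH2])
  have na: "summable (\<lambda>r. norm (norm (a r)))" using Sa by simp
  have nb: "summable (\<lambda>r. norm (norm (b r)))" using IH2 by simp
  have c2: "(\<lambda>m. \<Sum>r\<le>m. norm (a r) * norm (b (m - r))) sums ((\<Sum>k. norm (a k)) * (\<Sum>k. norm (b k)))"
    by (rule Cauchy_product_sums[OF na nb])
  have le: "norm (\<Sum>r\<le>m. a r * b (m - r)) \<le> (\<Sum>r\<le>m. norm (a r) * norm (b (m - r)))" for m
    by (rule order_trans[OF norm_sum]) (simp add: abs_mult)
  have sumn: "summable (\<lambda>m. norm (\<Sum>r\<le>m. a r * b (m - r)))"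
    by (rule summable_comparison_test'[OF sums_summable[OF c2], of 0]) (use le in auto)
  have "(\<Sum>m. norm (\<Sum>r\<le>m. a r * b (m - r))) \<le> (\<Sum>m. \<Sum>r\<le>m. norm (a r) * norm (b (m - r)))"
    by (rule suminf_le[OF le sumn sums_summable[OF c2]])
  also have "\<dots> = (\<Sum>k. norm (a k)) * (\<Sum>k. norm (b k))" using c2 by (simp add: sums_iff)
  also have "\<dots> \<le> (\<Sum>j. norm (T $ j * x ^ j)) * (\<Sum>j. norm (T $ j * x ^ j)) ^ i"
  proof -
    have ea: "(\<Sum>k. norm (a k)) = (\<Sum>j. norm (T $ j * x ^ j))" by (simp add: a_def)
    have "0 \<le> (\<Sum>k. norm (a k))" using Sa by (intro suminf_nonneg) auto
    then show ?thesis unfolding ea by (rule mult_left_mono[OF IH3])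
  qed
  finally have 3: "(\<Sum>m. norm (\<Sum>r\<le>m. a r * b (m - r))) \<le> (\<Sum>j. norm (T $ j * x ^ j)) ^ Suc i"
    by simp
  have 1: "(\<lambda>m. \<Sum>r\<le>m. a r * b (m - r)) sums ((\<Sum>j. T $ j * x ^ j) ^ Suc i)"
    using c1 IH1 unfolding a_def by (simp add: sums_iff)
  show ?case unfolding eq using 1 sumn 3 by simp
qed

lemma exp_sums_real: "(\<lambda>n. y ^ n / fact n) sums exp (y::real)"
  using exp_converges[of y] by (simp add: divide_inverse mult.commute)

lemma exp_comp_sums:
  fixes T :: "real fps" and x :: real
  assumes T0: "T $ 0 = 0" and S: "summable (\<lambda>j. norm (T $ j * x ^ j))"
  shows "(\<lambda>m. (fps_exp 1 oo T) $ m * x ^ m) sums exp (\<Sum>j. T $ j * x ^ j) \<and>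
         summable (\<lambda>m. norm ((fps_exp 1 oo T) $ m * x ^ m)) \<and>
         (\<Sum>m. norm ((fps_exp 1 oo T) $ m * x ^ m)) \<le> exp (\<Sum>j. norm (T $ j * x ^ j))"
proof -
  define s where "s = (\<Sum>j. T $ j * x ^ j)"
  define sa where "sa = (\<Sum>j. norm (T $ j * x ^ j))"
  define g where "g = (\<lambda>(i, m). (T ^ i) $ m * x ^ m / fact i)"
  define h2 where "h2 = (\<lambda>p. norm (g p))"
  define N where "N = (\<lambda>i. \<Sum>m. h2 (i, m))"
  have P: "(\<lambda>m. (T ^ i) $ m * x ^ m) sums (s ^ i) \<and> summable (\<lambda>m. norm ((T ^ i) $ m * x ^ m)) \<and>
         (\<Sum>m. norm ((T ^ i) $ m * x ^ m)) \<le> sa ^ i" for i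
    using pow_sums[OF S, of i] unfolding s_def sa_def .
  have gi: "(\<lambda>m. g (i, m)) sums (s ^ i / fact i)" for i
    using sums_divide[OF conjunct1[OF P[of i]], of "fact i"] by (simp add: g_def)
  have h2eq: "h2 (i, m) = norm ((T ^ i) $ m * x ^ m) / fact i" for i m
    by (simp add: h2_def g_def)
  have h2s: "(\<lambda>m. h2 (i, m)) sums N i" for i
  proof -
    have "summable (\<lambda>m. h2 (i, m))"
      unfolding h2eq using P[of i] by (intro summable_divide) auto
    then show ?thesis unfolding N_def by (simp add: summable_sums)
  qed
  have Nle: "N i \<le> sa ^ i / fact i" for i
  proof -
    have "N i = (\<Sum>m. norm ((T ^ i) $ m * x ^ m)) / fact i"
      unfolding N_def h2eq using P[of i] by (intro suminf_divide) auto
    also have "\<dots> \<le> sa ^ i / fact i"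
      using P[of i] by (intro divide_right_mono) auto
    finally show ?thesis .
  qed
  have N0: "N i \<ge> 0" for i unfolding N_def h2_def
    using h2s[of i] unfolding h2_def by (intro suminf_nonneg) (auto simp: sums_iff)
  have Nsum: "summable N"
    by (rule summable_comparison_test'[OF sums_summable[OF exp_sums_real[of sa]], of 0])
       (use Nle N0 in auto)
  have h2_has: "((\<lambda>m. h2 (i, m)) has_sum N i) UNIV" for i
    by (rule sums_nonneg_imp_has_sum[OF h2s]) (simp add: h2_def)
  have h2_summ: "h2 summable_on UNIV \<times> UNIV"
    by (rule summable_on_SigmaI[where g = N, OF h2_has])
       (use Nsum N0 in \<open>auto intro: summable_nonneg_imp_summable_on simp: h2_def\<close>)
  have g_summ: "g summable_on UNIV \<times> UNIV"
    using h2_summ unfolding h2_def by (rule abs_summable_summable)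
  define tot where "tot = infsum g (UNIV \<times> UNIV)"
  have g_has: "(g has_sum tot) (UNIV \<times> UNIV)" using g_summ tot_def by (simp add: has_sum_infsum)
  have gi_has: "((\<lambda>m. g (i, m)) has_sum (s ^ i / fact i)) UNIV" for i
  proof (rule norm_summable_imp_has_sum[OF _ gi])
    show "summable (\<lambda>m. norm (g (i, m)))" using h2s[of i] unfolding h2_def by (simp add: sums_iff)
  qed
  have "((\<lambda>i. s ^ i / fact i) has_sum tot) UNIV"
    by (rule has_sum_SigmaD[OF g_has gi_has])
  then have tot_eq: "tot = exp s"
    using has_sum_imp_sums exp_sums_real sums_unique2 by blast
  define c where "c = (\<lambda>m. (fps_exp 1 oo T) $ m)"
  have zero: "g (i, m) = 0" if "m < i" for i m
    using startsby_zero_power_prefix[OF T0] that by (simp add: g_def)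
  have ceq: "c m * x ^ m = (\<Sum>i\<in>{..m}. g (i, m))" for m
    by (simp add: c_def g_def fps_compose_nth atLeast0AtMost sum_distrib_right)
  have gm_has: "((\<lambda>i. g (i, m)) has_sum (c m * x ^ m)) UNIV" for m
  proof (rule norm_summable_imp_has_sum)
    show "summable (\<lambda>i. norm (g (i, m)))"
      by (rule sums_summable[OF sums_finite[of "{..m}"]]) (use zero in auto)
    show "(\<lambda>i. g (i, m)) sums (c m * x ^ m)"
      unfolding ceq by (rule sums_finite) (use zero in auto)
  qed
  have g_has': "((\<lambda>(m, i). g (i, m)) has_sum tot) (UNIV \<times> UNIV)"
    using g_has by (subst (asm) has_sum_swap) (simp add: case_prod_unfold)
  have "((\<lambda>m. c m * x ^ m) has_sum tot) UNIV"
    by (rule has_sum_SigmaD[OF g_has']) (use gm_has in auto)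
  then have part1: "(\<lambda>m. c m * x ^ m) sums exp s"
    using has_sum_imp_sums tot_eq by blast
  define tota where "tota = infsum h2 (UNIV \<times> UNIV)"
  have h2_has_tot: "(h2 has_sum tota) (UNIV \<times> UNIV)" using h2_summ tota_def by (simp add: has_sum_infsum)
  have "(N has_sum tota) UNIV" by (rule has_sum_SigmaD[OF h2_has_tot h2_has])
  then have N_sums: "N sums tota" by (rule has_sum_imp_sums)
  have tota_le: "tota \<le> exp sa"
  proof -
    have "tota = (\<Sum>i. N i)" using N_sums by (simp add: sums_iff)
    also have "\<dots> \<le> (\<Sum>i. sa ^ i / fact i)"
      by (rule suminf_le[OF Nle Nsum sums_summable[OF exp_sums_real]])
    also have "\<dots> = exp sa" using exp_sums_real by (simp add: sums_iff)
    finally show ?thesis .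
  qed
  have h2m_has: "((\<lambda>i. h2 (i, m)) has_sum (\<Sum>i\<in>{..m}. h2 (i, m))) UNIV" for m
  proof (rule norm_summable_imp_has_sum)
    show "summable (\<lambda>i. norm (h2 (i, m)))"
      by (rule sums_summable[OF sums_finite[of "{..m}"]]) (use zero in \<open>auto simp: h2_def\<close>)
    show "(\<lambda>i. h2 (i, m)) sums (\<Sum>i\<in>{..m}. h2 (i, m))"
      by (rule sums_finite) (use zero in \<open>auto simp: h2_def\<close>)
  qed
  have h2_has': "((\<lambda>(m, i). h2 (i, m)) has_sum tota) (UNIV \<times> UNIV)"
    using h2_has_tot by (subst (asm) has_sum_swap) (simp add: case_prod_unfold)
  have "((\<lambda>m. \<Sum>i\<in>{..m}. h2 (i, m)) has_sum tota) UNIV"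
    by (rule has_sum_SigmaD[OF h2_has']) (use h2m_has in auto)
  then have M_sums: "(\<lambda>m. \<Sum>i\<in>{..m}. h2 (i, m)) sums tota" by (rule has_sum_imp_sums)
  have cle: "norm (c m * x ^ m) \<le> (\<Sum>i\<in>{..m}. h2 (i, m))" for m
    unfolding ceq h2_def by (rule norm_sum)
  have summ: "summable (\<lambda>m. norm (c m * x ^ m))"
    by (rule summable_comparison_test'[OF sums_summable[OF M_sums], of 0]) (use cle in auto)
  have "(\<Sum>m. norm (c m * x ^ m)) \<le> tota"
    using suminf_le[OF cle summ sums_summable[OF M_sums]] M_sums by (simp add: sums_iff)
  then show ?thesis using part1 summ tota_le unfolding c_def s_def sa_def by auto
qed



lemma meas_suminf_real[measurable (raw)]:
  fixes f :: "nat \<Rightarrow> 'a \<Rightarrow> real"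
  assumes [measurable]: "\<And>j. f j \<in> borel_measurable M"
  shows "(\<lambda>x. \<Sum>j. f j x) \<in> borel_measurable M"
proof -
  have "(\<lambda>x. \<Sum>j. f j x) = (\<lambda>x. lim (\<lambda>n. \<Sum>j<n. f j x))" by (simp add: suminf_eq_lim)
  then show ?thesis by simp
qed

lemma IL:
  fixes T :: "real fps" and h :: "real \<Rightarrow> real" and s :: nat and M :: "real measure"
  assumes T0: "T $ 0 = 0" and hm[measurable]: "h \<in> borel_measurable M"
    and xm[measurable]: "(\<lambda>x. x) \<in> borel_measurable M"
    and AEs: "AE x in M. summable (\<lambda>j. norm (T $ j * x ^ j))"
    and int: "\<And>K. integrable M (\<lambda>x. \<bar>x\<bar> ^ K * exp (\<Sum>j. norm (T $ j * x ^ j)) * \<bar>h x\<bar>)"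
  shows "(\<lambda>m. (fps_exp 1 oo T) $ m * (LINT x|M. x ^ (s + m) * h x))
           sums (LINT x|M. x ^ s * exp (\<Sum>j. T $ j * x ^ j) * h x)"
proof -
  define c where "c = (\<lambda>m. (fps_exp 1 oo T) $ m)"
  define S where "S = (\<lambda>x. \<Sum>j. T $ j * x ^ j)"
  define Sa where "Sa = (\<lambda>x. \<Sum>j. norm (T $ j * x ^ j))"
  have Sm[measurable]: "S \<in> borel_measurable M" unfolding S_def by measurable
  have Sam[measurable]: "Sa \<in> borel_measurable M" unfolding Sa_def by measurable
  have good: "AE x in M. (\<lambda>m. c m * x ^ m) sums exp (S x) \<and> summable (\<lambda>m. norm (c m * x ^ m)) \<and>
      (\<Sum>m. norm (c m * x ^ m)) \<le> exp (Sa x) \<and> 1 \<le> exp (Sa x)"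
    using AEs
  proof eventually_elim
    case (elim x)
    have "0 \<le> Sa x" unfolding Sa_def using elim by (intro suminf_nonneg) auto
    then show ?case using exp_comp_sums[OF T0 elim] unfolding c_def S_def Sa_def by auto
  qed
  define w where "w = (\<lambda>x. \<bar>x\<bar> ^ s * exp (Sa x) * \<bar>h x\<bar>)"
  have wint: "integrable M w" using int[of s] unfolding w_def Sa_def .
  have intm: "integrable M (\<lambda>x. x ^ (s + m) * h x)" for m
  proof (rule Bochner_Integration.integrable_bound[OF int[of "s + m"]])
    show "(\<lambda>x. x ^ (s + m) * h x) \<in> borel_measurable M" by measurable
    show "AE x in M. norm (x ^ (s + m) * h x) \<le> norm (\<bar>x\<bar> ^ (s + m) * exp (\<Sum>j. norm (T $ j * x ^ j)) * \<bar>h x\<bar>)"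
      using good
    proof eventually_elim
      case (elim x)
      then have e1: "1 \<le> exp (Sa x)" by auto
      have "norm (x ^ (s + m) * h x) = (\<bar>x\<bar> ^ (s + m) * \<bar>h x\<bar>) * 1" by (simp add: abs_mult power_abs)
      also have "\<dots> \<le> (\<bar>x\<bar> ^ (s + m) * \<bar>h x\<bar>) * exp (Sa x)"
        by (rule mult_left_mono[OF e1]) simp
      also have "\<dots> = norm (\<bar>x\<bar> ^ (s + m) * exp (\<Sum>j. norm (T $ j * x ^ j)) * \<bar>h x\<bar>)"
        by (simp add: Sa_def abs_mult mult_ac)
      finally show ?case .
    qed
  qed
  define F where "F = (\<lambda>N x. \<Sum>m<N. c m * (x ^ (s + m) * h x))"
  define f where "f = (\<lambda>x. x ^ s * exp (S x) * h x)"
  have Fm: "F N \<in> borel_measurable M" for N unfolding F_def by measurable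
  have fm: "f \<in> borel_measurable M" unfolding f_def by measurable
  have lim: "AE x in M. (\<lambda>N. F N x) \<longlonglongrightarrow> f x"
    using good
  proof eventually_elim
    case (elim x)
    then have "(\<lambda>m. c m * x ^ m) sums exp (S x)" by auto
    then have "(\<lambda>m. c m * x ^ m * (x ^ s * h x)) sums (exp (S x) * (x ^ s * h x))" by (rule sums_mult2)
    moreover have "(\<lambda>m. c m * x ^ m * (x ^ s * h x)) = (\<lambda>m. c m * (x ^ (s + m) * h x))"
      by (auto simp: power_add mult_ac)
    ultimately have "(\<lambda>m. c m * (x ^ (s + m) * h x)) sums (exp (S x) * (x ^ s * h x))" by simp
    moreover have "exp (S x) * (x ^ s * h x) = x ^ s * exp (S x) * h x" by (simp add: mult_ac)
    ultimately have X: "(\<lambda>m. c m * (x ^ (s + m) * h x)) sums (x ^ s * exp (S x) * h x)" by simp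
    show ?case using X unfolding sums_def F_def f_def .
  qed
  have bound: "AE x in M. norm (F N x) \<le> w x" for N
    using good
  proof eventually_elim
    case (elim x)
    have "F N x = (\<Sum>m<N. c m * x ^ m) * (x ^ s * h x)"
      unfolding F_def sum_distrib_right by (intro sum.cong refl) (simp add: power_add mult_ac)
    then have "norm (F N x) = norm (\<Sum>m<N. c m * x ^ m) * (\<bar>x\<bar> ^ s * \<bar>h x\<bar>)"
      by (simp add: abs_mult power_abs)
    also have "\<dots> \<le> (\<Sum>m<N. norm (c m * x ^ m)) * (\<bar>x\<bar> ^ s * \<bar>h x\<bar>)"
      by (rule mult_right_mono[OF norm_sum]) simp
    also have "\<dots> \<le> (\<Sum>m. norm (c m * x ^ m)) * (\<bar>x\<bar> ^ s * \<bar>h x\<bar>)"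
      by (rule mult_right_mono[OF sum_le_suminf]) (use elim in auto)
    also have "\<dots> \<le> exp (Sa x) * (\<bar>x\<bar> ^ s * \<bar>h x\<bar>)"
      by (rule mult_right_mono) (use elim in auto)
    finally show ?case by (simp add: w_def mult_ac)
  qed
  have "(\<lambda>N. integral\<^sup>L M (F N)) \<longlonglongrightarrow> integral\<^sup>L M f"
    by (rule integral_dominated_convergence[OF fm Fm wint lim bound])
  moreover have "integral\<^sup>L M (F N) = (\<Sum>m<N. c m * (LINT x|M. x ^ (s + m) * h x))" for N
  proof -
    have "integral\<^sup>L M (F N) = (\<Sum>m<N. LINT x|M. c m * (x ^ (s + m) * h x))"
      unfolding F_def using Bochner_Integration.integral_sum[of "{..<N}" M "\<lambda>m x. c m * (x ^ (s + m) * h x)"] intm by auto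
    then show ?thesis by simp
  qed
  ultimately show ?thesis unfolding sums_def c_def f_def S_def by simp
qed



lemma shift_facts:
  fixes t :: "nat \<Rightarrow> nat \<Rightarrow> real"
  assumes S: "summable (\<lambda>j. \<bar>t (Suc j) a * x ^ Suc j\<bar>)"
  shows "summable (\<lambda>j. norm (Tf t a $ j * x ^ j))"
    and "(\<Sum>j. Tf t a $ j * x ^ j) = (\<Sum>j. t (Suc j) a * x ^ Suc j)"
    and "(\<Sum>j. norm (Tf t a $ j * x ^ j)) = (\<Sum>j. \<bar>t (Suc j) a * x ^ Suc j\<bar>)"
proof -
  have e1: "(\<lambda>j. norm (Tf t a $ Suc j * x ^ Suc j)) = (\<lambda>j. \<bar>t (Suc j) a * x ^ Suc j\<bar>)"
    by (simp add: Tf_nth)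
  have "summable (\<lambda>j. norm (Tf t a $ Suc j * x ^ Suc j))" using S e1 by simp
  then show s1: "summable (\<lambda>j. norm (Tf t a $ j * x ^ j))"
    using summable_Suc_iff[of "\<lambda>j. norm (Tf t a $ j * x ^ j)"] by simp
  have s2: "summable (\<lambda>j. Tf t a $ j * x ^ j)" using s1 by (rule summable_norm_cancel)
  have "(\<Sum>j. Tf t a $ Suc j * x ^ Suc j) = (\<Sum>j. Tf t a $ j * x ^ j) - Tf t a $ 0 * x ^ 0"
    by (rule suminf_split_head[OF s2])
  then show "(\<Sum>j. Tf t a $ j * x ^ j) = (\<Sum>j. t (Suc j) a * x ^ Suc j)"
    by (simp add: Tf_nth)
  have "(\<Sum>j. norm (Tf t a $ Suc j * x ^ Suc j)) = (\<Sum>j. norm (Tf t a $ j * x ^ j)) - norm (Tf t a $ 0 * x ^ 0)"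
    by (rule suminf_split_head[OF s1])
  then show "(\<Sum>j. norm (Tf t a $ j * x ^ j)) = (\<Sum>j. \<bar>t (Suc j) a * x ^ Suc j\<bar>)"
    using e1 by simp
qed

lemma stepA:
  fixes M :: "real measure" and t tb :: "nat \<Rightarrow> nat \<Rightarrow> real"
  assumes ok1: "okc n1 p1" and ok2: "okc n2 p2" and xm: "(\<lambda>x. x) \<in> borel_measurable M"
    and wm1: "\<forall>a\<in>{1..p1}. w1 a \<in> borel_measurable M"
    and wm2: "\<forall>b\<in>{1..p2}. w2 b \<in> borel_measurable M"
    and s1: "\<forall>a\<in>{1..p1}. AE x in M. summable (\<lambda>j. \<bar>t (Suc j) a * x ^ Suc j\<bar>)"
    and s2: "\<forall>b\<in>{1..p2}. AE x in M. summable (\<lambda>j. \<bar>tb (Suc j) b * x ^ Suc j\<bar>)"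
    and int: "\<forall>a\<in>{1..p1}. \<forall>b\<in>{1..p2}. \<forall>K::nat. integrable M (\<lambda>x.
           \<bar>x\<bar> ^ K * exp (\<Sum>j. \<bar>t (Suc j) a * x ^ Suc j\<bar>) * exp (\<Sum>j. \<bar>tb (Suc j) b * x ^ Suc j\<bar>)
           * \<bar>w1 a x * w2 b x\<bar>)"
  shows "imult (U n1 p1 (\<lambda>a. fps_exp 1 oo Tf t a)) (moment_matrix M n1 p1 n2 p2 w1 w2)
       = moment_matrix M n1 p1 n2 p2 (\<lambda>a x. exp (\<Sum>j. t (Suc j) a * x ^ Suc j) * w1 a x) w2"
proof (intro ext)
  fix i j
  define a where "a = mo_a n1 p1 i"
  define k where "k = mo_k n1 p1 i"
  define b where "b = mo_a n2 p2 j"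
  define kj where "kj = mo_k n2 p2 j"
  have a: "a \<in> {1..p1}" using mo_props[OF ok1] a_def by auto
  have b: "b \<in> {1..p2}" using mo_props[OF ok2] b_def by auto
  have ai: "mo_a n1 p1 i = a" and ki: "mo_k n1 p1 i = k" and bj: "mo_a n2 p2 j = b" and kjj: "mo_k n2 p2 j = kj"
    by (simp_all add: a_def k_def b_def kj_def)
  note [measurable] = xm wm1[rule_format, OF a] wm2[rule_format, OF b]
  define h where "h = (\<lambda>x. w1 a x * w2 b x)"
  have hm[measurable]: "h \<in> borel_measurable M" unfolding h_def by measurable
  have AEs: "AE x in M. summable (\<lambda>j. norm (Tf t a $ j * x ^ j))"
    using s1[rule_format, OF a] by eventually_elim (rule shift_facts(1)[of t a])
  have intK: "integrable M (\<lambda>x. \<bar>x\<bar> ^ K * exp (\<Sum>j. norm (Tf t a $ j * x ^ j)) * \<bar>h x\<bar>)" for K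
  proof (rule Bochner_Integration.integrable_bound[OF int[rule_format, OF a b, of K]])
    show "(\<lambda>x. \<bar>x\<bar> ^ K * exp (\<Sum>j. norm (Tf t a $ j * x ^ j)) * \<bar>h x\<bar>) \<in> borel_measurable M"
      by measurable
    show "AE x in M. norm (\<bar>x\<bar> ^ K * exp (\<Sum>j. norm (Tf t a $ j * x ^ j)) * \<bar>h x\<bar>)
        \<le> norm (\<bar>x\<bar> ^ K * exp (\<Sum>j. \<bar>t (Suc j) a * x ^ Suc j\<bar>) * exp (\<Sum>j. \<bar>tb (Suc j) b * x ^ Suc j\<bar>) * \<bar>w1 a x * w2 b x\<bar>)"
      using s1[rule_format, OF a] s2[rule_format, OF b]
    proof eventually_elim
      case (elim x)
      define A where "A = (\<Sum>j. \<bar>t (Suc j) a * x ^ Suc j\<bar>)"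
      define B where "B = (\<Sum>j. \<bar>tb (Suc j) b * x ^ Suc j\<bar>)"
      define P where "P = \<bar>x\<bar> ^ K * exp A * \<bar>h x\<bar>"
      have e: "(\<Sum>j. norm (Tf t a $ j * x ^ j)) = A" unfolding A_def by (rule shift_facts(3)[of t a x, OF elim(1)])
      have "0 \<le> B" unfolding B_def using elim(2) by (intro suminf_nonneg) auto
      then have ge: "1 \<le> exp B" by simp
      have P0: "0 \<le> P" unfolding P_def by simp
      have l: "norm (\<bar>x\<bar> ^ K * exp (\<Sum>j. norm (Tf t a $ j * x ^ j)) * \<bar>h x\<bar>) = P"
        unfolding e P_def by (simp add: abs_mult)
      have r: "norm (\<bar>x\<bar> ^ K * exp A * exp B * \<bar>w1 a x * w2 b x\<bar>) = P * exp B"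
        unfolding P_def h_def by (simp add: abs_mult mult_ac)
      have le: "P * 1 \<le> P * exp B" by (rule mult_left_mono[OF ge P0])
      have r': "norm (\<bar>x\<bar> ^ K * exp (\<Sum>j. \<bar>t (Suc j) a * x ^ Suc j\<bar>) * exp (\<Sum>j. \<bar>tb (Suc j) b * x ^ Suc j\<bar>) * \<bar>w1 a x * w2 b x\<bar>) = P * exp B"
        using r unfolding A_def B_def .
      show ?case unfolding l r' using le by simp
    qed
  qed
  have IL': "(\<lambda>m. (fps_exp 1 oo Tf t a) $ m * (LINT x|M. x ^ (k + kj + m) * h x))
           sums (LINT x|M. x ^ (k + kj) * exp (\<Sum>j. Tf t a $ j * x ^ j) * h x)"
    by (rule IL[OF Tf0 hm xm AEs intK])
  define g where "g = (\<lambda>m. idx n1 p1 a (k + m))"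
  have sm: "strict_mono g" using idx_strict_mono[OF ok1 a] unfolding g_def by (simp add: strict_mono_def)
  define f where "f = (\<lambda>l. U n1 p1 (\<lambda>a. fps_exp 1 oo Tf t a) i l * moment_matrix M n1 p1 n2 p2 w1 w2 l j)"
  have zero: "f l = 0" if "l \<notin> range g" for l
  proof (rule ccontr)
    assume "f l \<noteq> 0"
    then have h1: "mo_a n1 p1 l = a" "k \<le> mo_k n1 p1 l"
      unfolding f_def U_def ai ki by (auto split: if_splits)
    then have "l = g (mo_k n1 p1 l - k)" unfolding g_def using mo_props(2)[OF ok1, of l] by simp
    then show False using that by auto
  qed
  have fg: "f (g m) = (fps_exp 1 oo Tf t a) $ m * (LINT x|M. x ^ (k + kj + m) * h x)" for m
  proof -
    have "moment_matrix M n1 p1 n2 p2 w1 w2 (g m) j = (LINT x|M. x ^ (k + kj + m) * h x)"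
      unfolding moment_matrix_def g_def h_def mo_idx[OF ok1 a] bj kjj
      by (simp add: add_ac mult.assoc)
    then show ?thesis unfolding f_def by (simp add: g_def U_idx[OF ok1 a] ai ki)
  qed
  have "(\<lambda>m. f (g m)) sums (LINT x|M. x ^ (k + kj) * exp (\<Sum>j. Tf t a $ j * x ^ j) * h x)"
    using IL' by (simp add: fg)
  then have fs: "f sums (LINT x|M. x ^ (k + kj) * exp (\<Sum>j. Tf t a $ j * x ^ j) * h x)"
    using sums_mono_reindex[where g = g and f = f, OF sm zero] by blast
  have "(LINT x|M. x ^ (k + kj) * exp (\<Sum>j. Tf t a $ j * x ^ j) * h x)
      = (LINT x|M. x ^ (k + kj) * (exp (\<Sum>j. t (Suc j) a * x ^ Suc j) * w1 a x) * w2 b x)"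
  proof (rule integral_cong_AE)
    show "(\<lambda>x. x ^ (k + kj) * exp (\<Sum>j. Tf t a $ j * x ^ j) * h x) \<in> borel_measurable M" by measurable
    show "(\<lambda>x. x ^ (k + kj) * (exp (\<Sum>j. t (Suc j) a * x ^ Suc j) * w1 a x) * w2 b x) \<in> borel_measurable M"
      by measurable
    show "AE x in M. x ^ (k + kj) * exp (\<Sum>j. Tf t a $ j * x ^ j) * h x
        = x ^ (k + kj) * (exp (\<Sum>j. t (Suc j) a * x ^ Suc j) * w1 a x) * w2 b x"
      using s1[rule_format, OF a]
    proof eventually_elim
      case (elim x)
      have eq: "(\<Sum>j. Tf t a $ j * x ^ j) = (\<Sum>j. t (Suc j) a * x ^ Suc j)"
        by (rule shift_facts(2)[of t a x, OF elim])
      show ?case unfolding eq h_def by (simp add: mult_ac)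
    qed
  qed
  then show "imult (U n1 p1 (\<lambda>a. fps_exp 1 oo Tf t a)) (moment_matrix M n1 p1 n2 p2 w1 w2) i j
       = moment_matrix M n1 p1 n2 p2 (\<lambda>a x. exp (\<Sum>j. t (Suc j) a * x ^ Suc j) * w1 a x) w2 i j"
    using fs unfolding imult_def f_def moment_matrix_def ai ki bj kjj by (simp add: sums_iff)
qed



lemma stepB:
  fixes M :: "real measure" and t tb :: "nat \<Rightarrow> nat \<Rightarrow> real"
  assumes ok1: "okc n1 p1" and ok2: "okc n2 p2" and xm: "(\<lambda>x. x) \<in> borel_measurable M"
    and wm1: "\<forall>a\<in>{1..p1}. w1 a \<in> borel_measurable M"
    and wm2: "\<forall>b\<in>{1..p2}. w2 b \<in> borel_measurable M"
    and s1: "\<forall>a\<in>{1..p1}. AE x in M. summable (\<lambda>j. \<bar>t (Suc j) a * x ^ Suc j\<bar>)"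
    and s2: "\<forall>b\<in>{1..p2}. AE x in M. summable (\<lambda>j. \<bar>tb (Suc j) b * x ^ Suc j\<bar>)"
    and int: "\<forall>a\<in>{1..p1}. \<forall>b\<in>{1..p2}. \<forall>K::nat. integrable M (\<lambda>x.
           \<bar>x\<bar> ^ K * exp (\<Sum>j. \<bar>t (Suc j) a * x ^ Suc j\<bar>) * exp (\<Sum>j. \<bar>tb (Suc j) b * x ^ Suc j\<bar>)
           * \<bar>w1 a x * w2 b x\<bar>)"
  shows "imult (moment_matrix M n1 p1 n2 p2 (\<lambda>a x. exp (\<Sum>j. t (Suc j) a * x ^ Suc j) * w1 a x) w2)
              (L n2 p2 (\<lambda>b. fps_exp 1 oo (- Tf tb b)))
       = moment_matrix M n1 p1 n2 p2
           (\<lambda>a x. exp (\<Sum>j. t (Suc j) a * x ^ Suc j) * w1 a x)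
           (\<lambda>b x. inverse (exp (\<Sum>j. tb (Suc j) b * x ^ Suc j)) * w2 b x)"
proof (intro ext)
  fix i j
  define a where "a = mo_a n1 p1 i"
  define k where "k = mo_k n1 p1 i"
  define b where "b = mo_a n2 p2 j"
  define kj where "kj = mo_k n2 p2 j"
  have a: "a \<in> {1..p1}" using mo_props[OF ok1] a_def by auto
  have b: "b \<in> {1..p2}" using mo_props[OF ok2] b_def by auto
  have ai: "mo_a n1 p1 i = a" and ki: "mo_k n1 p1 i = k" and bj: "mo_a n2 p2 j = b" and kjj: "mo_k n2 p2 j = kj"
    by (simp_all add: a_def k_def b_def kj_def)
  note [measurable] = xm wm1[rule_format, OF a] wm2[rule_format, OF b]
  define h where "h = (\<lambda>x. exp (\<Sum>j. t (Suc j) a * x ^ Suc j) * w1 a x * w2 b x)"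
  have hm[measurable]: "h \<in> borel_measurable M" unfolding h_def by measurable
  define T where "T = - Tf tb b"
  have T0: "T $ 0 = 0" unfolding T_def by simp
  have neq: "(\<lambda>j. norm (T $ j * x ^ j)) = (\<lambda>j. norm (Tf tb b $ j * x ^ j))" for x
    unfolding T_def by simp
  have AEs: "AE x in M. summable (\<lambda>j. norm (T $ j * x ^ j))"
    using s2[rule_format, OF b] by eventually_elim (simp only: neq, rule shift_facts(1)[of tb b])
  have intK: "integrable M (\<lambda>x. \<bar>x\<bar> ^ K * exp (\<Sum>j. norm (T $ j * x ^ j)) * \<bar>h x\<bar>)" for K
  proof (rule Bochner_Integration.integrable_bound[OF int[rule_format, OF a b, of K]])
    show "(\<lambda>x. \<bar>x\<bar> ^ K * exp (\<Sum>j. norm (T $ j * x ^ j)) * \<bar>h x\<bar>) \<in> borel_measurable M"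
      unfolding T_def by measurable
    show "AE x in M. norm (\<bar>x\<bar> ^ K * exp (\<Sum>j. norm (T $ j * x ^ j)) * \<bar>h x\<bar>)
        \<le> norm (\<bar>x\<bar> ^ K * exp (\<Sum>j. \<bar>t (Suc j) a * x ^ Suc j\<bar>) * exp (\<Sum>j. \<bar>tb (Suc j) b * x ^ Suc j\<bar>) * \<bar>w1 a x * w2 b x\<bar>)"
      using s1[rule_format, OF a] s2[rule_format, OF b]
    proof eventually_elim
      case (elim x)
      define A where "A = (\<Sum>j. \<bar>t (Suc j) a * x ^ Suc j\<bar>)"
      define B where "B = (\<Sum>j. \<bar>tb (Suc j) b * x ^ Suc j\<bar>)"
      define S1 where "S1 = (\<Sum>j. t (Suc j) a * x ^ Suc j)"
      define Q where "Q = \<bar>x\<bar> ^ K * exp B * \<bar>w1 a x * w2 b x\<bar>"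
      have e: "(\<Sum>j. norm (T $ j * x ^ j)) = B" unfolding B_def neq by (rule shift_facts(3)[of tb b x, OF elim(2)])
      have "S1 \<le> A" unfolding S1_def A_def using summable_rabs[OF elim(1)] by linarith
      then have ge: "exp S1 \<le> exp A" by simp
      have Q0: "0 \<le> Q" unfolding Q_def by simp
      have l: "norm (\<bar>x\<bar> ^ K * exp (\<Sum>j. norm (T $ j * x ^ j)) * \<bar>h x\<bar>) = Q * exp S1"
        unfolding e Q_def h_def S1_def by (simp add: abs_mult mult_ac)
      have r: "norm (\<bar>x\<bar> ^ K * exp A * exp B * \<bar>w1 a x * w2 b x\<bar>) = Q * exp A"
        unfolding Q_def by (simp add: abs_mult mult_ac)
      have le: "Q * exp S1 \<le> Q * exp A" by (rule mult_left_mono[OF ge Q0])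
      have r': "norm (\<bar>x\<bar> ^ K * exp (\<Sum>j. \<bar>t (Suc j) a * x ^ Suc j\<bar>) * exp (\<Sum>j. \<bar>tb (Suc j) b * x ^ Suc j\<bar>) * \<bar>w1 a x * w2 b x\<bar>) = Q * exp A"
        using r unfolding A_def B_def .
      show ?case unfolding l r' using le .
    qed
  qed
  have IL': "(\<lambda>m. (fps_exp 1 oo T) $ m * (LINT x|M. x ^ (k + kj + m) * h x))
           sums (LINT x|M. x ^ (k + kj) * exp (\<Sum>j. T $ j * x ^ j) * h x)"
    by (rule IL[OF T0 hm xm AEs intK])
  define G1 where "G1 = moment_matrix M n1 p1 n2 p2 (\<lambda>a x. exp (\<Sum>j. t (Suc j) a * x ^ Suc j) * w1 a x) w2"
  define D where "D = (\<lambda>b. fps_exp 1 oo (- Tf tb b))"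
  define g where "g = (\<lambda>m. idx n2 p2 b (kj + m))"
  have sm: "strict_mono g" using idx_strict_mono[OF ok2 b] unfolding g_def by (simp add: strict_mono_def)
  define f where "f = (\<lambda>l. G1 i l * L n2 p2 D l j)"
  have zero: "f l = 0" if "l \<notin> range g" for l
  proof (rule ccontr)
    assume "f l \<noteq> 0"
    then have h1: "mo_a n2 p2 l = b" "kj \<le> mo_k n2 p2 l"
      unfolding f_def L_def itrans_def U_def bj kjj by (auto split: if_splits)
    then have "l = g (mo_k n2 p2 l - kj)" unfolding g_def using mo_props(2)[OF ok2, of l] by simp
    then show False using that by auto
  qed
  have fg: "f (g m) = (fps_exp 1 oo T) $ m * (LINT x|M. x ^ (k + kj + m) * h x)" for m
  proof -
    have 1: "G1 i (g m) = (LINT x|M. x ^ (k + kj + m) * h x)"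
      unfolding G1_def moment_matrix_def g_def h_def mo_idx[OF ok2 b] ai ki
      by (simp add: add_ac mult.assoc)
    have 2: "L n2 p2 D (g m) j = (fps_exp 1 oo T) $ m"
      unfolding L_def itrans_def g_def U_idx[OF ok2 b] bj kjj by (simp add: D_def T_def)
    show ?thesis unfolding f_def 1 2 by (simp add: mult.commute)
  qed
  have "(\<lambda>m. f (g m)) sums (LINT x|M. x ^ (k + kj) * exp (\<Sum>j. T $ j * x ^ j) * h x)"
    using IL' by (simp add: fg)
  then have fs: "f sums (LINT x|M. x ^ (k + kj) * exp (\<Sum>j. T $ j * x ^ j) * h x)"
    using sums_mono_reindex[where g = g and f = f, OF sm zero] by blast
  have "(LINT x|M. x ^ (k + kj) * exp (\<Sum>j. T $ j * x ^ j) * h x)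
      = (LINT x|M. x ^ (k + kj) * (exp (\<Sum>j. t (Suc j) a * x ^ Suc j) * w1 a x) * (inverse (exp (\<Sum>j. tb (Suc j) b * x ^ Suc j)) * w2 b x))"
  proof (rule integral_cong_AE)
    show "(\<lambda>x. x ^ (k + kj) * exp (\<Sum>j. T $ j * x ^ j) * h x) \<in> borel_measurable M"
      unfolding T_def by measurable
    show "(\<lambda>x. x ^ (k + kj) * (exp (\<Sum>j. t (Suc j) a * x ^ Suc j) * w1 a x) * (inverse (exp (\<Sum>j. tb (Suc j) b * x ^ Suc j)) * w2 b x)) \<in> borel_measurable M"
      by measurable
    show "AE x in M. x ^ (k + kj) * exp (\<Sum>j. T $ j * x ^ j) * h x
        = x ^ (k + kj) * (exp (\<Sum>j. t (Suc j) a * x ^ Suc j) * w1 a x) * (inverse (exp (\<Sum>j. tb (Suc j) b * x ^ Suc j)) * w2 b x)"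
      using s2[rule_format, OF b]
    proof eventually_elim
      case (elim x)
      have sT: "summable (\<lambda>j. Tf tb b $ j * x ^ j)"
        by (rule summable_norm_cancel[OF shift_facts(1)[of tb b x, OF elim]])
      have "(\<lambda>j. T $ j * x ^ j) = (\<lambda>j. - (Tf tb b $ j * x ^ j))" unfolding T_def by simp
      then have "(\<Sum>j. T $ j * x ^ j) = - (\<Sum>j. Tf tb b $ j * x ^ j)"
        using suminf_minus[OF sT] by simp
      also have "\<dots> = - (\<Sum>j. tb (Suc j) b * x ^ Suc j)"
        by (simp only: shift_facts(2)[of tb b x, OF elim])
      finally have eq: "exp (\<Sum>j. T $ j * x ^ j) = inverse (exp (\<Sum>j. tb (Suc j) b * x ^ Suc j))"
        by (simp add: exp_minus)
      show ?case unfolding eq h_def by (simp add: mult_ac)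
    qed
  qed
  then show "imult G1 (L n2 p2 D) i j
       = moment_matrix M n1 p1 n2 p2
           (\<lambda>a x. exp (\<Sum>j. t (Suc j) a * x ^ Suc j) * w1 a x)
           (\<lambda>b x. inverse (exp (\<Sum>j. tb (Suc j) b * x ^ Suc j)) * w2 b x) i j"
    using fs unfolding imult_def f_def moment_matrix_def ai ki bj kjj by (simp add: sums_iff)
qed

theorem theorem3p1:
  fixes M :: "real measure" and p1 p2 :: nat and n1 n2 :: "nat \<Rightarrow> nat"
    and w1 w2 :: "nat \<Rightarrow> real \<Rightarrow> real" and t tb :: "nat \<Rightarrow> nat \<Rightarrow> real"
  assumes "finite_measure M" and "sets M = sets borel"
    and "p1 \<ge> 1" and "p2 \<ge> 1"
    and "\<forall>a\<in>{1..p1}. n1 a \<ge> 1" and "\<forall>b\<in>{1..p2}. n2 b \<ge> 1"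
    and "\<forall>a\<in>{1..p1}. w1 a \<in> borel_measurable M"
    and "\<forall>b\<in>{1..p2}. w2 b \<in> borel_measurable M"
    and "\<forall>a\<in>{1..p1}. AE x in M. summable (\<lambda>j. \<bar>t (Suc j) a * x ^ Suc j\<bar>)"
    and "\<forall>b\<in>{1..p2}. AE x in M. summable (\<lambda>j. \<bar>tb (Suc j) b * x ^ Suc j\<bar>)"
    and "\<forall>a\<in>{1..p1}. \<forall>b\<in>{1..p2}. \<forall>K::nat. integrable M (\<lambda>x.
           \<bar>x\<bar> ^ K * exp (\<Sum>j. \<bar>t (Suc j) a * x ^ Suc j\<bar>) * exp (\<Sum>j. \<bar>tb (Suc j) b * x ^ Suc j\<bar>)
           * \<bar>w1 a x * w2 b x\<bar>)"
  shows "imult (imult (W0 n1 p1 t) (moment_matrix M n1 p1 n2 p2 w1 w2)) (iinv_lower (Wbar0 n2 p2 tb))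
       = moment_matrix M n1 p1 n2 p2
           (\<lambda>a x. exp (\<Sum>j. t (Suc j) a * x ^ Suc j) * w1 a x)
           (\<lambda>b x. inverse (exp (\<Sum>j. tb (Suc j) b * x ^ Suc j)) * w2 b x)"
proof -
  have ok1: "okc n1 p1" using assms(3,5) unfolding okc_def by auto
  have ok2: "okc n2 p2" using assms(4,6) unfolding okc_def by auto
  have xm: "(\<lambda>x::real. x) \<in> borel_measurable M"
    by (rule measurable_ident_sets[OF assms(2)])
  have inv: "iinv_lower (Wbar0 n2 p2 tb) = L n2 p2 (\<lambda>b. fps_exp 1 oo (- Tf tb b))"
    unfolding Wbar0_eq[OF ok2] by (rule iinv_L[OF ok2]) (rule exp_compose_inv[OF Tf0])
  show ?thesis
    by (simp only: W0_eq[OF ok1] inv stepA[OF ok1 ok2 xm assms(7-11)] stepB[OF ok1 ok2 xm assms(7-11)])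
qed


end
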